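(* For any odd prime $p$ and any irreducible polynomial $P(t)\in\mathbb{F}_p[t]$, the Laurent series $\Phi(t):=\Theta_p(P(t))\in\mathbb{F}_p(\!(t^{-1})\!)$ exhibits full maximal escape of mass with respect to the sequence $\{P(t)^k\}_{k\ge0}$.
   Context: The $p$-Cantor sequence: for an odd prime $p$, $p_2=\frac{p-1}{2}$, identify $\{0,\dots,p-1\}$ with $\mathbb{F}_p$ and let $\phi_p(n)$ be the word of length $p$ whose $i$-th letter ($0\le i\le p-1$) is $n\binom{p_2}{i/2}\bmod p$ for even $i$ and $0$ for odd $i$; $\phi_p$ acts on words by concatenation. $(c^{(p)}_i)_{i\ge0}=\lim_n\phi_p^n(1)$ and $\Theta_p(t)=t^{-1}\sum_{i\ge0}c^{(p)}_it^{-i}$. For $\Theta(t)=\sum_{i=-h}^\infty a_it^{-i}$, $\Theta(P(t)):=\sum_{i=-h}^\infty a_iP(t)^{-i}$. Maximal escape of mass: for a quadratic irrational $\Theta\in\mathbb{F}_q(\!(t^{-1})\!)$ and irreducible $P$, let $\ell_{\Theta P^k}$ be the period length of the eventually periodic continued fraction of $\Theta P^k$ and $A_1^{[\Theta P^k]},\dots,A^{[\Theta P^k]}_{\ell_{\Theta P^k}}$ the partial quotients of one period; $R_{k,n}=\frac{\sum_i\max\{\deg A_i^{[\Theta P^k]}-n,0\}}{\sum_i\deg A_i^{[\Theta P^k]}}$. $\Theta$ exhibits $c$-maximal escape of mass w.r.t. $\{P^k\}$ if $\lim_{n\to\infty}\limsup_{k\to\infty}R_{k,n}\ge c$, and full maximal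 escape of mass if this holds with $c=1$. *)

theory Defs
  imports "HOL-Computational_Algebra.Computational_Algebra" "HOL-Library.Extended_Real"
    "HOL-Library.Liminf_Limsup"
begin

text \<open>The field F_q((t^-1)) is modelled by the type 'a fls of formal Laurent
  series in the variable X = t^-1 (finitely many negative powers of X). A polynomial
  A(t) in F_q[t] is the Laurent series sum_j a_j X^-j.\<close>

definition tpoly :: "'a::comm_ring_1 poly \<Rightarrow> 'a fls" where
  "tpoly A = (\<Sum>j\<le>degree A. fls_const (coeff A j) * fls_X_inv ^ j)"

definition lpoly_part :: "'a::comm_ring_1 fls \<Rightarrow> 'a poly" where
  "lpoly_part th = (\<Sum>j\<le>nat (- fls_subdegree th). monom (fls_nth th (- int j)) j)"

primrec cf_state :: "'a::field fls \<Rightarrow> nat \<Rightarrow> 'a fls" where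
  "cf_state th 0 = th"
| "cf_state th (Suc n) = inverse (cf_state th n - tpoly (lpoly_part (cf_state th n)))"

definition cf_pq :: "'a::field fls \<Rightarrow> nat \<Rightarrow> 'a poly" where
  "cf_pq th n = lpoly_part (cf_state th n)"

definition cf_period :: "'a::field fls \<Rightarrow> nat" where
  "cf_period th = (LEAST l. 0 < l \<and> (\<exists>N. \<forall>m\<ge>N. cf_pq th (m + l) = cf_pq th m))"

definition cf_preperiod :: "'a::field fls \<Rightarrow> nat" where
  "cf_preperiod th = (LEAST N. \<forall>m\<ge>N. cf_pq th (m + cf_period th) = cf_pq th m)"

definition cf_period_idx :: "'a::field fls \<Rightarrow> nat set" where
  "cf_period_idx th = {cf_preperiod th ..< cf_preperiod th + cf_period th}"

definition quadratic_irrational :: "'a::field fls \<Rightarrow> bool" where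
  "quadratic_irrational th \<longleftrightarrow>
     (\<exists>a b c :: 'a poly. a \<noteq> 0 \<and> tpoly a * th ^ 2 + tpoly b * th + tpoly c = 0) \<and>
     \<not> (\<exists>u v :: 'a poly. v \<noteq> 0 \<and> tpoly v * th = tpoly u)"

definition escape_ratio :: "'a::field fls \<Rightarrow> 'a poly \<Rightarrow> nat \<Rightarrow> nat \<Rightarrow> real" where
  "escape_ratio th P k n =
     (let x = th * tpoly (P ^ k) in
      real (\<Sum>i\<in>cf_period_idx x. max (degree (cf_pq x i) - n) 0)
      / real (\<Sum>i\<in>cf_period_idx x. degree (cf_pq x i)))"

definition c_max_escape :: "real \<Rightarrow> 'a::field fls \<Rightarrow> 'a poly \<Rightarrow> bool" where
  "c_max_escape c th P \<longleftrightarrow>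
     (\<exists>L. (\<lambda>n. limsup (\<lambda>k. ereal (escape_ratio th P k n))) \<longlonglongrightarrow> L \<and> L \<ge> ereal c)"

definition full_max_escape :: "'a::field fls \<Rightarrow> 'a poly \<Rightarrow> bool" where
  "full_max_escape th P \<longleftrightarrow> c_max_escape 1 th P"

text \<open>The p-Cantor substitution on words over F_p (letters are field elements; the field
  has characteristic p, so of_nat realises reduction mod p).\<close>
definition cantor_phi :: "nat \<Rightarrow> 'a::field list \<Rightarrow> 'a list" where
  "cantor_phi p w = concat (map (\<lambda>a. map (\<lambda>i. if even i then a * of_nat (((p - 1) div 2) choose (i div 2))
                                               else 0) [0..<p]) w)"

text \<open>c_i is the i-th letter of the limit word lim phi^n(1); phi^(i+1)(1) has length p^(i+1) > i.\<close>
definition cantor_seq :: "nat \<Rightarrow> nat \<Rightarrow> 'a::field" where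
  "cantor_seq p i = ((cantor_phi p ^^ Suc i) [1]) ! i"

text \<open>Theta_p(t) = t^-1 sum c_i t^-i, a power series in X = t^-1 with zero constant term.\<close>
definition Theta_fps :: "nat \<Rightarrow> 'a::field fps" where
  "Theta_fps p = Abs_fps (\<lambda>n. if n = 0 then 0 else cantor_seq p (n - 1))"

definition Theta :: "nat \<Rightarrow> 'a::field fls" where
  "Theta p = fps_to_fls (Theta_fps p)"

text \<open>Theta_p(P(t)) = sum_i a_i P(t)^-i, i.e. composition of the power series (in X) Theta_p
  with 1/P(t), which is a power series in X with zero constant term when deg P \<ge> 1.\<close>
definition Theta_at :: "nat \<Rightarrow> 'a::field poly \<Rightarrow> 'a fls" where
  "Theta_at p P = fps_to_fls (Theta_fps p oo fls_regpart (inverse (tpoly P)))"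

end

theory Submission
  imports Defs "HOL-Number_Theory.Residues"
begin

unbundle fps_syntax



lemma tpoly_nth: "tpoly (A::'a::comm_ring_1 poly) $$ n = (if n \<le> 0 then Polynomial.coeff A (nat (-n)) else 0)"
proof -
  have "tpoly A $$ n = (\<Sum>j\<le>degree A. (if n = - int j then Polynomial.coeff A j else 0))"
    unfolding tpoly_def fls_nth_sum by (intro sum.cong) auto
  also have "\<dots> = (if n \<le> 0 then Polynomial.coeff A (nat (-n)) else 0)"
  proof (cases "n \<le> 0")
    case True
    have "(\<Sum>j\<le>degree A. (if n = - int j then Polynomial.coeff A j else 0)) = (\<Sum>j\<le>degree A. (if j = nat (-n) then Polynomial.coeff A j else 0))"
      using True by (intro sum.cong) auto
    also have "\<dots> = Polynomial.coeff A (nat (-n))" by (auto simp: coeff_eq_0)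
    finally show ?thesis using True by simp
  next
    case False then show ?thesis by (intro trans[OF sum.neutral]) auto
  qed
  finally show ?thesis .
qed

lemma tpoly_pCons: "tpoly (pCons a A) = fls_const a + fls_X_inv * (tpoly (A::'a::comm_ring_1 poly))"
  by (rule fls_eqI) (auto simp: tpoly_nth fls_X_inv_times_conv_shift coeff_pCons nat_diff_distrib split: nat.split)

lemma tpoly_0[simp]: "tpoly 0 = 0" by (rule fls_eqI) (simp add: tpoly_nth)
lemma tpoly_const[simp]: "tpoly [:c:] = fls_const c" by (rule fls_eqI) (auto simp: tpoly_nth coeff_pCons split: nat.split)
lemma tpoly_1[simp]: "tpoly 1 = 1" using tpoly_const[of 1] by (simp add: one_pCons)
lemma tpoly_add[simp]: "tpoly (A + B) = tpoly A + tpoly B" by (rule fls_eqI) (simp add: tpoly_nth)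
lemma tpoly_minus[simp]: "tpoly (- A) = - tpoly (A::'a::comm_ring_1 poly)" by (rule fls_eqI) (simp add: tpoly_nth)
lemma tpoly_diff[simp]: "tpoly (A - B) = tpoly A - tpoly (B::'a::comm_ring_1 poly)" by (rule fls_eqI) (simp add: tpoly_nth)
lemma tpoly_smult[simp]: "tpoly (Polynomial.smult c A) = fls_const c * tpoly (A::'a::comm_ring_1 poly)"
  by (rule fls_eqI) (simp add: tpoly_nth)
lemma tpoly_mult[simp]: "tpoly (A * B) = tpoly A * tpoly (B::'a::comm_ring_1 poly)"
proof (induction A)
  case (pCons a A)
  show ?case by (simp add: tpoly_pCons pCons.IH algebra_simps)
qed simp
lemma tpoly_power[simp]: "tpoly (A ^ n) = tpoly (A::'a::comm_ring_1 poly) ^ n"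
  by (induction n) auto
lemma tpoly_eq_0_iff[simp]: "tpoly A = 0 \<longleftrightarrow> (A::'a::comm_ring_1 poly) = 0"
proof
  assume "tpoly A = 0"
  then have "Polynomial.coeff A n = 0" for n using tpoly_nth[of A "- int n"] by simp
  then show "A = 0" by (simp add: poly_eq_iff)
qed simp
lemma tpoly_inj: "tpoly A = tpoly B \<longleftrightarrow> A = (B::'a::comm_ring_1 poly)"
  using tpoly_eq_0_iff[of "A - B"] by (auto simp del: tpoly_eq_0_iff)

lemma tpoly_subdegree: "A \<noteq> 0 \<Longrightarrow> fls_subdegree (tpoly (A::'a::comm_ring_1 poly)) = - int (degree A)"
  by (rule fls_subdegree_eqI) (auto simp: tpoly_nth coeff_eq_0)

lemma lpoly_part_eq:
  fixes th :: "'a::comm_ring_1 fls"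
  assumes "th = tpoly A \<or> fls_subdegree (th - tpoly A) > 0"
  shows "lpoly_part th = A"
proof -
  have nth: "th $$ (- int j) = Polynomial.coeff A j" for j
  proof (cases "th = tpoly A")
    case False
    with assms have "fls_subdegree (th - tpoly A) > 0" by auto
    then have "(th - tpoly A) $$ (- int j) = 0"
      by (intro fls_eq0_below_subdegree) auto
    then show ?thesis by (simp add: tpoly_nth)
  qed (simp add: tpoly_nth)
  have deg: "j \<le> nat (- fls_subdegree th)" if "Polynomial.coeff A j \<noteq> 0" for j
  proof -
    have "th $$ (- int j) \<noteq> 0" using nth that by simp
    then have "fls_subdegree th \<le> - int j" by (rule fls_subdegree_leI)
    then show ?thesis by simp
  qed
  show ?thesis
  proof (rule poly_eqI)
    fix n
    have "Polynomial.coeff (lpoly_part th) n = (\<Sum>j\<le>nat (- fls_subdegree th). if j = n then Polynomial.coeff A j else 0)"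
      unfolding lpoly_part_def coeff_sum by (intro sum.cong) (auto simp: nth coeff_monom)
    also have "\<dots> = Polynomial.coeff A n" using deg[of n] by auto
    finally show "Polynomial.coeff (lpoly_part th) n = Polynomial.coeff A n" .
  qed
qed





definition cb :: "nat \<Rightarrow> nat \<Rightarrow> 'a::field" where
  "cb p r = (if even r then of_nat (((p - 1) div 2) choose (r div 2)) else 0)"

definition cw :: "nat \<Rightarrow> nat \<Rightarrow> 'a::field list" where
  "cw p n = (cantor_phi p ^^ n) [1]"

lemma cantor_phi_append: "cantor_phi p (u @ v) = cantor_phi p u @ cantor_phi p v"
  by (simp add: cantor_phi_def)

lemma cantor_phi_Cons: "cantor_phi p (a # v) = map (\<lambda>i. a * cb p i) [0..<p] @ cantor_phi p v"
  by (simp add: cantor_phi_def cb_def)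

lemma length_cantor_phi: "length (cantor_phi p w) = p * length w"
  by (induction w) (simp_all add: cantor_phi_Cons cantor_phi_def[of p "[]"])

lemma nth_cantor_phi: "i < length w \<Longrightarrow> r < p \<Longrightarrow> cantor_phi p w ! (p * i + r) = w ! i * cb p r"
proof (induction w arbitrary: i)
  case (Cons a w)
  show ?case
  proof (cases i)
    case 0 then show ?thesis using Cons.prems by (simp add: cantor_phi_Cons nth_append)
  next
    case (Suc j)
    have "p * i + r = p + (p * j + r)" using Suc by simp
    then show ?thesis using Cons Suc by (simp add: cantor_phi_Cons nth_append)
  qed
qed simp

lemma length_cw: "length (cw p n) = p ^ n"
  by (induction n) (simp_all add: cw_def length_cantor_phi)

lemma cw_Suc: "cw p (Suc n) = cantor_phi p (cw p n)" by (simp add: cw_def)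

lemma cw_prefix: assumes "p > 0" shows "\<exists>R. cw p (Suc n) = (cw p n :: 'a::field list) @ R"
proof (induction n)
  case 0
  have "[0..<p] = 0 # [1..<p]" using assms by (simp add: upt_rec)
  then show ?case by (simp add: cw_def cantor_phi_def cb_def)
next
  case (Suc n)
  then obtain R where "cw p (Suc n) = (cw p n :: 'a list) @ R" by blast
  then show ?case by (simp add: cw_Suc cantor_phi_append)
qed

lemma cw_prefix_nth: assumes "p>0" "i < p ^ n" shows "cw p (Suc n) ! i = (cw p n ! i :: 'a::field)"
  using cw_prefix[OF assms(1), of n, where 'a='a] assms(2) by (auto simp: nth_append length_cw)

lemma cw_mono: assumes "p > 0" "n \<le> m" "i < p ^ n" shows "cw p m ! i = cw p n ! i"
  using assms(2)
proof (induction m rule: dec_induct)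
  case (step m)
  have "p ^ n \<le> p ^ m" by (rule power_increasing) (use step assms in auto)
  then have "i < p ^ m" using assms(3) by simp
  then show ?case using step cw_prefix_nth[OF assms(1), where 'a='a] by simp
qed simp

lemma ilt: assumes "p \<ge> (2::nat)" shows "i < p ^ Suc i"
proof -
  have "i < 2 ^ i" by (rule less_exp)
  also have "(2::nat) ^ i \<le> p ^ i" using assms by (rule power_mono) simp
  also have "p ^ i \<le> p ^ Suc i" using assms by simp
  finally show ?thesis .
qed

lemma cw_cantor_seq: assumes "p \<ge> 2" "i < p ^ n" shows "cw p n ! i = cantor_seq p i"
proof -
  have i: "i < p ^ Suc i" using ilt assms(1) by blast
  have "cw p n ! i = cw p (max n (Suc i)) ! i" using cw_mono[of p n "max n (Suc i)" i] assms by (simp del: max_def) (rule sym)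
  also have "\<dots> = cw p (Suc i) ! i" using cw_mono[of p "Suc i" "max n (Suc i)" i] assms i by simp
  finally show ?thesis by (simp add: cantor_seq_def cw_def)
qed

lemma cantor_seq_0: "p \<ge> 2 \<Longrightarrow> cantor_seq p 0 = 1"
  by (simp add: cantor_seq_def cantor_phi_def)

lemma cantor_seq_rec: assumes "p \<ge> 2" "r < p" shows "cantor_seq p (p * i + r) = cantor_seq p i * cb p r"
proof -
  have i: "i < p ^ Suc i" using ilt assms(1) by blast
  have "p * i + r < p ^ Suc (Suc i)"
  proof -
    have "p * i + r < p * (i + 1)" using assms by simp
    also have "\<dots> \<le> p * p ^ Suc i" using i by (intro mult_left_mono) auto
    finally show ?thesis by simp
  qed
  then have "cantor_seq p (p * i + r) = cw p (Suc (Suc i)) ! (p * i + r)" by (rule cw_cantor_seq[OF assms(1), symmetric])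
  also have "\<dots> = cw p (Suc i) ! i * cb p r" using i assms unfolding cw_Suc[of p "Suc i"] by (simp add: nth_cantor_phi length_cw)
  also have "\<dots> = cantor_seq p i * cb p r" by (subst cw_cantor_seq[OF assms(1) i]) (rule refl)
  finally show ?thesis .
qed





definition Ufps :: "nat \<Rightarrow> 'a::field fps" where "Ufps p = Abs_fps (cantor_seq p)"

lemma B_nth: "((1 + fps_X^2)^m :: 'a::field fps) $ r = (if even r then of_nat (m choose (r div 2)) else 0)"
proof -
  have "(1 + fps_X^2)^m = (\<Sum>k\<le>m. fps_const (of_nat (m choose k)) * fps_X^(2*k) :: 'a fps)"
    using binomial_ring[of "fps_X^2 :: 'a fps" 1 m] by (simp add: add.commute power_mult fps_of_nat)
  then have "((1 + fps_X^2)^m :: 'a fps) $ r = (\<Sum>k\<le>m. of_nat (m choose k) * (if r = 2*k then 1 else 0))"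
    by (simp add: fps_sum_nth)
  also have "\<dots> = (\<Sum>k\<le>m. if k = r div 2 \<and> even r then of_nat (m choose k) else 0)"
    by (intro sum.cong) auto
  also have "\<dots> = (if even r then of_nat (m choose (r div 2)) else 0)"
    by (auto simp: binomial_eq_0)
  finally show ?thesis .
qed

lemma compose_Xp_nth: assumes "p > 0"
  shows "(A oo fps_X^p) $ n = (if p dvd n then A $ (n div p) else (0::'a::field))"
proof -
  have "(A oo fps_X^p) $ n = (\<Sum>i=0..n. if i = n div p \<and> p dvd n then A $ i else 0)"
    unfolding fps_compose_nth
    by (intro sum.cong refl) (use assms in \<open>auto simp: power_mult[symmetric]\<close>)
  also have "\<dots> = (if p dvd n then A $ (n div p) else 0)"
    by auto
  finally show ?thesis .
qed

lemma cb_B: assumes "odd p" shows "((1 + fps_X^2)^((p - 1) div 2) :: 'a::field fps) $ r = (if r < p then cb p r else 0)"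
proof -
  have "((p - 1) div 2) choose (r div 2) = 0" if "even r" "r \<ge> p"
    using that assms by (intro binomial_eq_0) (elim oddE evenE; simp)
  then show ?thesis by (auto simp: B_nth cb_def binomial_eq_0)
qed

lemma U_eq:
  assumes "odd p" "p \<ge> 2"
  shows "Ufps p = (1 + fps_X^2)^((p - 1) div 2) * (Ufps p oo fps_X^p :: 'a::field fps)"
proof (rule fps_ext)
  fix n
  define B :: "'a fps" where "B = (1 + fps_X^2)^((p - 1) div 2)"
  have p0: "p > 0" using assms by simp
  have "(B * (Ufps p oo fps_X^p)) $ n = (\<Sum>r=0..n. B $ r * (Ufps p oo fps_X^p) $ (n - r))"
    by (rule fps_mult_nth)
  also have "\<dots> = (\<Sum>r=0..n. if r = n mod p then B $ r * (Ufps p oo fps_X^p) $ (n - r) else 0)"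
  proof (intro sum.cong refl)
    fix r assume r: "r \<in> {0..n}"
    show "B $ r * (Ufps p oo fps_X^p) $ (n - r) = (if r = n mod p then B $ r * (Ufps p oo fps_X^p) $ (n - r) else 0)"
    proof (cases "r < p \<and> p dvd (n - r)")
      case True
      then have "n mod p = r mod p" using r
        by (metis atLeastAtMost_iff le_add_diff_inverse2 mod_add_left_eq add_0 dvd_imp_mod_0)
      then show ?thesis using True by simp
    next
      case False
      then show ?thesis using assms p0 by (auto simp: B_def cb_B[OF assms(1), simplified] compose_Xp_nth)
    qed
  qed
  also have "\<dots> = B $ (n mod p) * (Ufps p oo fps_X^p) $ (n - n mod p)"
    by (simp add: mod_less_eq_dividend)
  also have "\<dots> = cb p (n mod p) * cantor_seq p (n div p)"
    using p0 assms by (simp add: B_def cb_B[OF assms(1), simplified] compose_Xp_nth minus_mod_eq_mult_div Ufps_def)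
  also have "\<dots> = cantor_seq p n"
    using cantor_seq_rec[OF assms(2), of "n mod p" "n div p", where 'a='a] p0 by (simp add: mult.commute)
  finally show "Ufps p $ n = (B * (Ufps p oo fps_X^p)) $ n" by (simp add: Ufps_def)
qed

lemma pow2k: "(a^k)^2 * a = (a::'b::comm_monoid_mult)^(2*k+1)"
  by (metis power_add power_mult power_one_right mult.commute)

lemma U_sq:
  assumes "odd p" "prime p" "CHAR('a::field) = p"
  shows "(Ufps p :: 'a fps)^2 * (1 + fps_X^2) = 1"
proof -
  define Z :: "'a fps" where "Z = (Ufps p)^2 * (1 + fps_X^2)"
  define S :: "'a fps" where "S = Ufps p oo fps_X^p"
  have p2: "p \<ge> 2" using assms prime_ge_2_nat by blast
  have p0: "(fps_X^p :: 'a fps) $ 0 = 0" using p2 by simp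
  have pe: "2 * ((p - 1) div 2) + 1 = p" using assms(1) by (elim oddE) simp
  have fd: "((1::'a fps) + fps_X^2)^p = 1 + fps_X^(2*p)"
    by (subst freshmans_dream) (use assms in \<open>simp_all add: power_mult\<close>)
  have c1: "((1::'a fps) + fps_X^2) oo fps_X^p = 1 + fps_X^(2*p)"
    using p0 by (simp add: fps_compose_add_distrib fps_compose_power[symmetric] power_mult mult.commute)
  have "Z = ((1 + fps_X^2)^((p - 1) div 2))^2 * (1 + fps_X^2) * S^2"
    unfolding Z_def S_def by (subst U_eq[OF assms(1) p2]) (simp add: power_mult_distrib mult_ac)
  also have "\<dots> = (1 + fps_X^2)^p * S^2"
    by (subst pe[symmetric], subst pow2k) (rule refl)
  also have "\<dots> = ((1 + fps_X^2) oo fps_X^p) * ((Ufps p)^2 oo fps_X^p)"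
    unfolding S_def fd c1 fps_compose_power[OF p0] ..
  also have "\<dots> = Z oo fps_X^p"
    unfolding Z_def fps_compose_mult_distrib[OF p0] by (simp add: mult.commute)
  finally have Zeq: "Z = Z oo fps_X^p" .
  have "Z $ n = (if n = 0 then 1 else 0)" for n
  proof (induction n rule: less_induct)
    case (less n)
    show ?case
    proof (cases "n = 0")
      case True
      then show ?thesis using p2 by (simp add: Z_def Ufps_def cantor_seq_0 power2_eq_square)
    next
      case False
      have "Z $ n = (if p dvd n then Z $ (n div p) else 0)"
        using Zeq compose_Xp_nth[of p Z n] p2 by simp
      also have "\<dots> = 0"
      proof (cases "p dvd n")
        case True
        then have "n div p < n" "n div p \<noteq> 0" using False p2 by (auto elim!: dvdE)
        then show ?thesis using less True by simp
      qed simp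
      finally show ?thesis using False by simp
    qed
  qed
  then show ?thesis unfolding Z_def[symmetric] by (intro fps_ext) simp
qed





lemma fls_subdegree_uminus': "fls_subdegree (- f) = fls_subdegree (f :: 'a::ring_1 fls)"
  by (cases "f = 0") (auto intro!: fls_subdegree_eqI)

lemma tpoly_of_nat: "tpoly (of_nat n :: 'a::comm_ring_1 poly) = of_nat n"
  by (induction n) auto

lemma tpoly_numeral[simp]: "tpoly (numeral n :: 'a::comm_ring_1 poly) = numeral n"
  using tpoly_of_nat[of "numeral n", where 'a='a] by simp

lemma cf_main:
  fixes P :: "'a::field poly" and w g :: "'a fls" and W G :: "'a fps"
  assumes char: "CHAR('a) = p" "prime p" "odd p"
    and dP: "degree P \<ge> 1"
    and k: "k = p ^ j" "j \<ge> 1"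
    and g: "tpoly P * g = 1" "g = fps_to_fls G" "G $ 0 = 0"
    and w: "w ^ 2 * (1 + g ^ 2) = 1" "w = fps_to_fls W" "W $ 0 = 1"
  defines "x \<equiv> (g * w) * tpoly (P ^ k)"
  defines "D \<equiv> P ^ 2 + 1"
  defines "e \<equiv> (k - 1) div 2"
  shows "cf_pq x i = (if i = 0 then D ^ e else if odd i then - (D ^ (e + 1) + D ^ (e + 1)) else D ^ e + D ^ e)"
proof -
  define fP where "fP = tpoly P"
  define L where "L = 1 + g ^ 2"
  have p2: "p \<ge> 2" using char prime_ge_2_nat by blast
  have k3: "k \<ge> 3"
  proof -
    have "p ^ 1 \<le> p ^ j" using k p2 by (intro power_increasing) auto
    then show ?thesis using k char p2 by (cases "p = 2") auto
  qed
  have ke: "k = 2 * e + 1" "e \<ge> 1"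
  proof -
    have "odd k" using char k by simp
    then show "k = 2 * e + 1" unfolding e_def by (elim oddE) simp
    then show "e \<ge> 1" using k3 by simp
  qed
  have two: "(2::'a) \<noteq> 0"
  proof
    assume "(2::'a) = 0"
    then have "of_nat 2 = (0::'a)" by simp
    then have "p dvd 2" using char by (simp only: of_nat_eq_0_iff_char_dvd)
    then show False using char by (metis dvd_refl even_numeral prime_nat_iff two_is_prime_nat primes_dvd_imp_eq)
  qed
  have P0: "P \<noteq> 0" using dP by auto
  have fP0: "fP \<noteq> 0" using P0 by (simp add: fP_def)
  have sfP: "fls_subdegree fP = - int (degree P)" using P0 by (simp add: fP_def tpoly_subdegree)
  have gfP: "fP * g = 1" using g by (simp add: fP_def)
  have Lk: "L ^ k = 1 + g ^ (2 * k)"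
    unfolding L_def using char k by (subst freshmans_dream') (simp_all add: power_mult)
  have fD: "tpoly D = fP ^ 2 * L"
    unfolding D_def fP_def L_def by (simp add: algebra_simps gfP[unfolded fP_def] power2_eq_square)
      (metis gfP fP_def mult.assoc mult.commute mult_1)
  have xe: "x = w * fP ^ (2 * e)"
  proof -
    have "x = (fP * g) * w * fP ^ (2 * e)" unfolding x_def ke(1) fP_def by (simp add: algebra_simps)
    then show ?thesis using gfP by simp
  qed
  have fa0: "tpoly (D ^ e) = fP ^ (2 * e) * L ^ e"
    by (simp add: fD power_mult_distrib power_mult)
  define y where "y = x - tpoly (D ^ e)"
  define z where "z = x + tpoly (D ^ e)"
  have yz: "y * z * tpoly D = -1"
  proof -
    have "y * z * tpoly D = (w ^ 2 * L - L ^ k) * (fP ^ (2 * e + 1)) ^ 2"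
      unfolding y_def z_def xe fa0 fD ke(1)
      by (simp add: algebra_simps power2_eq_square power_mult_distrib power_add power_mult)
    also have "\<dots> = - ((fP * g) ^ (2 * k))"
      unfolding Lk using w(1) by (simp add: L_def ke(1) power_mult_distrib power_mult[symmetric] mult.commute) (simp add: power2_eq_square)
    finally show ?thesis using gfP by simp
  qed
  have y0: "y \<noteq> 0" and z0: "z \<noteq> 0" and D0: "tpoly D \<noteq> 0" using yz by auto
  define Z where "Z = W + (1 + G ^ 2) ^ e"
  have zZ: "z = fP ^ (2 * e) * fps_to_fls Z"
    unfolding z_def xe fa0 Z_def L_def w g by (simp add: algebra_simps fps_to_fls_power)
  have Z00: "Z $ 0 = 2" unfolding Z_def using w(3) g(3) by (simp add: fps_power_zeroth)
  have sZ: "fls_subdegree (fps_to_fls Z) = 0"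
    using Z00 two by (intro fls_subdegree_eqI) auto
  have Z0: "fps_to_fls Z \<noteq> 0" using Z00 two by (metis fps_to_fls_eq_0_iff fps_zero_nth)
  have sz: "fls_subdegree z = - int (2 * e * degree P)"
    unfolding zZ using Z0 fP0 by (simp add: fls_subdegree_pow sfP sZ)
  have sD: "fls_subdegree (tpoly D) = - int (2 * degree P)"
  proof -
    have "degree D = 2 * degree P"
      unfolding D_def using P0 dP by (subst degree_add_eq_left) (auto simp: degree_power_eq)
    moreover have "D \<noteq> 0" using D0 by auto
    ultimately show ?thesis by (simp add: tpoly_subdegree)
  qed
  have sy: "fls_subdegree y = int (2 * e * degree P + 2 * degree P)"
  proof -
    have "fls_subdegree (y * z * tpoly D) = 0" using yz by simp
    then show ?thesis using y0 z0 D0 sz sD by simp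
  qed
  have dPpos: "degree P > 0" using dP by simp
  define A1 where "A1 = - (D ^ (e + 1) + D ^ (e + 1))"
  define A2 where "A2 = D ^ e + D ^ e"
  have st1: "inverse y = - (z * tpoly D)"
    using yz y0 by (simp add: field_simps)
  have st2: "inverse (- (z * tpoly D) - tpoly A1) = z"
  proof -
    have "- (z * tpoly D) - tpoly A1 = - (y * tpoly D)"
      unfolding A1_def y_def z_def by (simp add: algebra_simps)
    moreover have "- (y * tpoly D) * z = 1" using yz by (simp add: algebra_simps)
    then have "inverse (- (y * tpoly D)) = z" by (rule inverse_unique)
    ultimately show ?thesis by simp
  qed
  have st3: "inverse (z - tpoly A2) = inverse y"
    unfolding A2_def y_def z_def by (simp add: algebra_simps)
  have lp0: "lpoly_part x = D ^ e"
  proof (rule lpoly_part_eq)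
    have "0 < fls_subdegree y" by (simp only: sy of_nat_0_less_iff) (use dPpos in simp)
    then show "x = tpoly (D ^ e) \<or> 0 < fls_subdegree (x - tpoly (D ^ e))" unfolding y_def by blast
  qed
  have lp1: "lpoly_part (- (z * tpoly D)) = A1"
  proof (rule lpoly_part_eq)
    have "- (z * tpoly D) - tpoly A1 = - (y * tpoly D)"
      unfolding A1_def y_def z_def by (simp add: algebra_simps)
    moreover have "fls_subdegree (- (y * tpoly D)) = int (2 * e * degree P)"
      using y0 D0 sy sD by (simp add: fls_subdegree_uminus')
    moreover have "2 * e * degree P > 0" using ke(2) dPpos by simp
    ultimately show "- (z * tpoly D) = tpoly A1 \<or> 0 < fls_subdegree (- (z * tpoly D) - tpoly A1)" by simp
  qed
  have lp2: "lpoly_part z = A2"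
  proof (rule lpoly_part_eq)
    have "z - tpoly A2 = y" unfolding A2_def y_def z_def by (simp add: algebra_simps)
    moreover have "0 < fls_subdegree y" by (simp only: sy of_nat_0_less_iff) (use dPpos in simp)
    ultimately show "z = tpoly A2 \<or> 0 < fls_subdegree (z - tpoly A2)" by simp
  qed
  have s1: "cf_state x 1 = - (z * tpoly D)"
    using lp0 st1 by (simp add: y_def)
  have step: "cf_state x (Suc m) = inverse (cf_state x m - tpoly (lpoly_part (cf_state x m)))" for m
    by simp
  have s_odd: "cf_state x (2 * n + 1) = - (z * tpoly D) \<and> cf_state x (2 * n + 2) = z" for n
  proof (induction n)
    case 0
    have a: "cf_state x 1 = - (z * tpoly D)" using s1 by simp
    have "cf_state x 2 = inverse (cf_state x 1 - tpoly (lpoly_part (cf_state x 1)))"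
      using cf_state.simps(2)[of x 1] by (simp only: numeral_2_eq_2 One_nat_def)
    then show ?case using a lp1 st2 by (simp del: cf_state.simps add: numeral_2_eq_2)
  next
    case (Suc n)
    have e1: "2 * Suc n + 1 = Suc (2 * n + 2)" "2 * Suc n + 2 = Suc (2 * Suc n + 1)" by simp_all
    have a: "cf_state x (2 * Suc n + 1) = - (z * tpoly D)"
      unfolding e1(1) cf_state.simps(2) using Suc.IH lp2 st3 st1 by (simp del: cf_state.simps)
    have "cf_state x (2 * Suc n + 2) = z"
      unfolding e1(2) cf_state.simps(2) a lp1 st2 ..
    then show ?case using a by blast
  qed
  show ?thesis
  proof (cases "i = 0")
    case True then show ?thesis using lp0 by (simp add: cf_pq_def)
  next
    case False
    show ?thesis
    proof (cases "odd i")
      case True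
      then obtain n where "i = 2 * n + 1" by (elim oddE)
      then show ?thesis using s_odd[of n] lp1 by (simp del: cf_state.simps add: cf_pq_def A1_def)
    next
      case ev: False
      have i2: "i = 2 * (i div 2 - 1) + 2" using False ev by presburger
      define n where "n = i div 2 - 1"
      have "i = 2 * n + 2" using i2 n_def by simp
      then show ?thesis using s_odd[of n] lp2 by (simp del: cf_state.simps add: cf_pq_def A2_def)
    qed
  qed
qed





lemma ratio_le1: "escape_ratio th P k n \<le> 1"
proof -
  define x where "x = th * tpoly (P ^ k)"
  define a where "a = (\<Sum>i\<in>cf_period_idx x. max (degree (cf_pq x i) - n) 0)"
  define b where "b = (\<Sum>i\<in>cf_period_idx x. degree (cf_pq x i))"
  have "a \<le> b" unfolding a_def b_def by (intro sum_mono) simp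
  then have "real a / real b \<le> 1" by (cases "b = 0") (auto simp: divide_le_eq_1)
  then show ?thesis by (simp add: escape_ratio_def Let_def x_def a_def b_def)
qed

lemma ratio_formula:
  fixes x :: "'a::field fls"
  assumes pq: "\<And>i. cf_pq x i = (if i = 0 then B0 else if odd i then A1 else A2)"
    and dA: "degree A1 \<noteq> degree A2" and dB: "degree B0 = degree A2"
  shows "(\<Sum>i\<in>cf_period_idx x. f (degree (cf_pq x i))) = f (degree A1) + f (degree A2)"
proof -
  have dg: "degree (cf_pq x i) = (if odd i then degree A1 else degree A2)" for i
    using dB by (cases "i = 0") (simp_all add: pq)
  have A12: "A1 \<noteq> A2"
  proof
    assume "A1 = A2" then show False using dA by simp
  qed
  have per2: "\<exists>N. \<forall>m\<ge>N. cf_pq x (m + 2) = cf_pq x m"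
    by (rule exI[of _ 1]) (auto simp: pq)
  have cp: "cf_period x = 2"
    unfolding cf_period_def
  proof (rule Least_equality)
    show "0 < (2::nat) \<and> (\<exists>N. \<forall>m\<ge>N. cf_pq x (m + 2) = cf_pq x m)" using per2 by simp
  next
    fix l assume l: "0 < l \<and> (\<exists>N. \<forall>m\<ge>N. cf_pq x (m + l) = cf_pq x m)"
    show "2 \<le> l"
    proof (rule ccontr)
      assume "\<not> 2 \<le> l"
      then have "l = 1" using l by simp
      then obtain N where N: "\<forall>m\<ge>N. cf_pq x (m + 1) = cf_pq x m" using l by blast
      have "cf_pq x (2 * N + 1 + 1) = cf_pq x (2 * N + 1)" using N by simp
      then show False using A12 by (simp add: pq)
    qed
  qed
  define N0 where "N0 = cf_preperiod x"
  have "cf_period_idx x = {N0, Suc N0}" unfolding cf_period_idx_def cp N0_def[symmetric] by auto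
  then have "(\<Sum>i\<in>cf_period_idx x. f (degree (cf_pq x i))) = f (degree (cf_pq x N0)) + f (degree (cf_pq x (Suc N0)))"
    by simp
  then show ?thesis unfolding dg by (cases "odd N0") (auto simp: add.commute)
qed

lemma sum_self_smult: "A + A = Polynomial.smult 2 (A :: 'a::comm_ring_1 poly)"
proof -
  have "Polynomial.smult (1 + 1) A = A + A" by (simp only: smult_add_left smult_1_left)
  then show ?thesis by simp
qed

lemma lpoly_part_rat:
  fixes a b :: "'a::field poly"
  assumes b: "b \<noteq> 0"
  shows "tpoly a / tpoly b - tpoly (a div b) = tpoly (a mod b) / tpoly b"
    and "lpoly_part (tpoly a / tpoly b) = a div b"
proof -
  have tb: "tpoly b \<noteq> 0" using b by simp
  have "tpoly a = tpoly (b * (a div b) + a mod b)" by (simp only: mult_div_mod_eq)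
  then have "tpoly a = tpoly b * tpoly (a div b) + tpoly (a mod b)"
    by (simp only: tpoly_add tpoly_mult)
  then show eq: "tpoly a / tpoly b - tpoly (a div b) = tpoly (a mod b) / tpoly b"
    using tb by (simp add: field_simps)
  show "lpoly_part (tpoly a / tpoly b) = a div b"
  proof (rule lpoly_part_eq)
    show "tpoly a / tpoly b = tpoly (a div b) \<or> 0 < fls_subdegree (tpoly a / tpoly b - tpoly (a div b))"
    proof (cases "a mod b = 0")
      case True
      then show ?thesis using eq by simp
    next
      case False
      have "fls_subdegree (tpoly (a mod b) / tpoly b) = - int (degree (a mod b)) + int (degree b)"
        using False tb b by (simp add: divide_inverse tpoly_subdegree)
      moreover have "degree (a mod b) < degree b" by (rule degree_mod_less'[OF b False])
      ultimately show ?thesis unfolding eq by simp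
    qed
  qed
qed

lemma rat_cf:
  fixes a0 b0 :: "'a::field poly"
  assumes "b0 \<noteq> 0"
  shows "cf_state (tpoly a0 / tpoly b0) n = 0 \<or>
    (\<exists>a b. b \<noteq> 0 \<and> degree b + n \<le> degree b0 \<and> cf_state (tpoly a0 / tpoly b0) n = tpoly a / tpoly b)"
proof (induction n)
  case 0
  show ?case using assms by auto
next
  case (Suc n)
  from Suc.IH show ?case
  proof (elim disjE exE conjE)
    assume h: "cf_state (tpoly a0 / tpoly b0) n = 0"
    have "lpoly_part (0::'a fls) = 0" by (rule lpoly_part_eq) simp
    then show ?case using h by simp
  next
    fix a b :: "'a poly"
    assume b: "b \<noteq> 0" and deg: "degree b + n \<le> degree b0"
      and h: "cf_state (tpoly a0 / tpoly b0) n = tpoly a / tpoly b"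
    have s: "cf_state (tpoly a0 / tpoly b0) (Suc n) = inverse (tpoly (a mod b) / tpoly b)"
      using h lpoly_part_rat[OF b, of a] by simp
    show ?case
    proof (cases "a mod b = 0")
      case True
      then show ?thesis using s by simp
    next
      case False
      have "degree (a mod b) < degree b" by (rule degree_mod_less'[OF b False])
      moreover have "cf_state (tpoly a0 / tpoly b0) (Suc n) = tpoly b / tpoly (a mod b)"
        using s by simp
      ultimately show ?thesis using False deg
        by (intro disjI2 exI[of _ b] exI[of _ "a mod b"]) auto
    qed
  qed
qed

lemma main_escape:
  fixes p :: nat and P :: "'a::field poly"
  assumes "prime p" and "odd p" and "card (UNIV :: 'a set) = p" and "irreducible P"
  shows "quadratic_irrational (Theta_at p P) \<and> full_max_escape (Theta_at p P) P"
proof -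
  have charp: "CHAR('a) = p"
  proof -
    have "CHAR('a) dvd p" using CHAR_dvd_CARD[where 'a='a] assms(3) by simp
    moreover have "CHAR('a) \<noteq> 1" using CHAR_not_1[where 'a='a] by simp
    ultimately show ?thesis using assms(1) by (auto simp: prime_nat_iff)
  qed
  have two: "(2::'a) \<noteq> 0"
  proof
    assume "(2::'a) = 0"
    then have "of_nat 2 = (0::'a)" by simp
    then have "p dvd 2" using charp by (simp only: of_nat_eq_0_iff_char_dvd)
    then have "p \<le> 2" by (rule dvd_imp_le) simp
    moreover have "p \<ge> 2" using assms(1) prime_ge_2_nat by blast
    ultimately show False using assms(2) by simp
  qed
  have P0: "P \<noteq> 0" using assms(4) by auto
  have dP: "degree P \<ge> 1"
  proof -
    have "\<not> is_unit P" using assms(4) by (auto simp: irreducible_def)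
    then show ?thesis using is_unit_iff_degree[OF P0] by simp
  qed
  define fP where "fP = tpoly P"
  have fP0: "fP \<noteq> 0" using P0 by (simp add: fP_def)
  have sfP: "fls_subdegree fP = - int (degree P)" using P0 by (simp add: fP_def tpoly_subdegree)
  define G where "G = fls_regpart (inverse fP)"
  define g where "g = fps_to_fls G"
  have sinv: "fls_subdegree (inverse fP) = int (degree P)" using sfP by simp
  have g_inv: "g = inverse fP" unfolding g_def G_def using sinv by (intro fls_regpart_to_fls_trivial) simp
  have G0: "G $ 0 = 0" unfolding G_def using sinv dP by (simp add: fls_eq0_below_subdegree)
  have gfP: "tpoly P * g = 1" using fP0 by (simp add: g_inv fP_def)
  define W where "W = Ufps p oo G"
  define w where "w = fps_to_fls W"
  have p2: "p \<ge> 2" using assms(1) prime_ge_2_nat by blast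
  have W0: "W $ 0 = 1" unfolding W_def using p2 by (simp add: Ufps_def cantor_seq_0)
  have Th: "Theta_fps p = fps_X * (Ufps p :: 'a fps)"
    by (rule fps_ext) (simp add: Theta_fps_def Ufps_def)
  have Phi: "Theta_at p P = g * w"
  proof -
    have "Theta_fps p oo G = G * W"
      unfolding Th W_def by (simp add: fps_compose_mult_distrib[OF G0] G0)
    then show ?thesis unfolding Theta_at_def fP_def[symmetric] G_def[symmetric] g_def w_def
      by (simp add: fls_times_fps_to_fls)
  qed
  have Wsq: "W ^ 2 * (1 + G ^ 2) = 1"
  proof -
    have "((Ufps p :: 'a fps) ^ 2 * (1 + fps_X ^ 2)) oo G = 1"
      using U_sq[OF assms(2) assms(1) charp] by simp
    moreover have "(fps_X ^ 2 oo G) = G ^ 2"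
      using fps_compose_power[OF G0, of fps_X 2] G0 by simp
    ultimately show ?thesis unfolding W_def
      by (simp add: fps_compose_mult_distrib[OF G0] fps_compose_add_distrib fps_compose_power[OF G0] G0)
  qed
  have wsq: "w ^ 2 * (1 + g ^ 2) = 1"
  proof -
    have "fps_to_fls (W ^ 2 * (1 + G ^ 2)) = 1" using Wsq by simp
    then show ?thesis unfolding w_def g_def by (simp add: fls_times_fps_to_fls fps_to_fls_power)
  qed
  define D where "D = P ^ 2 + 1"
  have DPhi: "tpoly D * (g * w) ^ 2 = 1"
  proof -
    have "tpoly D * (g * w) ^ 2 = w ^ 2 * ((tpoly P * g) ^ 2 + g ^ 2)"
      unfolding D_def by (simp add: algebra_simps power2_eq_square)
    also have "\<dots> = 1" using gfP wsq by (simp add: add.commute)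
    finally show ?thesis .
  qed
  have D0: "D \<noteq> 0" using DPhi by auto
  have QI: "quadratic_irrational (Theta_at p P)"
    unfolding quadratic_irrational_def Phi
  proof (intro conjI notI)
    show "\<exists>a b c :: 'a poly. a \<noteq> 0 \<and> tpoly a * (g * w) ^ 2 + tpoly b * (g * w) + tpoly c = 0"
      by (rule exI[of _ D], rule exI[of _ 0], rule exI[of _ "-1"]) (simp add: D0 DPhi)
  next
    assume "\<exists>u v :: 'a poly. v \<noteq> 0 \<and> tpoly v * (g * w) = tpoly u"
    then obtain u v :: "'a poly" where v0: "v \<noteq> 0" and uv: "tpoly v * (g * w) = tpoly u" by blast
    define e1 where "e1 = (p ^ 1 - 1) div 2"
    have pq1: "cf_pq ((g * w) * tpoly (P ^ (p ^ 1))) i = (if i = 0 then D ^ e1 else if odd i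
       then - (D ^ (e1 + 1) + D ^ (e1 + 1)) else D ^ e1 + D ^ e1)" for i
      unfolding D_def e1_def
      by (rule cf_main[OF charp assms(1) assms(2) dP refl _ gfP g_def G0 wsq w_def W0]) simp
    have tv: "tpoly v \<noteq> 0" using v0 by simp
    have gw: "g * w = tpoly u / tpoly v" using uv tv by (simp add: field_simps)
    have xr: "(g * w) * tpoly (P ^ (p ^ 1)) = tpoly (u * P ^ p) / tpoly v" unfolding gw by simp
    define N where "N = Suc (degree v)"
    have "cf_state (tpoly (u * P ^ p) / tpoly v) N = 0"
      using rat_cf[OF v0, of "u * P ^ p" N] by (auto simp: N_def)
    moreover have "lpoly_part (0::'a fls) = 0" by (rule lpoly_part_eq) simp
    ultimately have "cf_pq ((g * w) * tpoly (P ^ (p ^ 1))) N = 0" unfolding xr cf_pq_def by simp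
    moreover have "D ^ (e1 + 1) \<noteq> 0" "D ^ e1 \<noteq> 0" using D0 by simp_all
    ultimately show False using pq1[of N] two by (auto simp: N_def sum_self_smult split: if_splits)
  qed
  define d where "d = degree P"
  have dpos: "d > 0" using dP d_def by simp
  have lower: "escape_ratio (Theta_at p P) P (p ^ j) n \<ge> 1 - real n / (real d * real p ^ j)" if j: "j \<ge> 1" for j n
  proof -
    define k where "k = p ^ j"
    define e where "e = (k - 1) div 2"
    define x where "x = (g * w) * tpoly (P ^ k)"
    have ke: "k = 2 * e + 1"
    proof -
      have "odd k" using assms(2) by (simp add: k_def)
      then show ?thesis unfolding e_def by (elim oddE) simp
    qed
    have e1: "e \<ge> 1"
    proof -
      have "p ^ 1 \<le> p ^ j" using j p2 by (intro power_increasing) auto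
      then have "k \<ge> 3" using assms(2) p2 unfolding k_def by (cases "p = 2") auto
      then show ?thesis using ke by simp
    qed
    have pq: "cf_pq x i = (if i = 0 then D ^ e else if odd i then - (D ^ (e + 1) + D ^ (e + 1)) else D ^ e + D ^ e)" for i
      unfolding x_def D_def e_def
      by (rule cf_main[OF charp assms(1) assms(2) dP k_def j gfP g_def G0 wsq w_def W0])
    have dD: "degree D = 2 * d"
      unfolding D_def d_def using P0 dP by (subst degree_add_eq_left) (auto simp: degree_power_eq)
    have dB1: "degree (D ^ (e + 1)) = 2 * d * (e + 1)"
      using degree_power_eq[OF D0, of "e + 1"] dD by simp
    have dB: "degree (D ^ e) = 2 * d * e"
      using degree_power_eq[OF D0, of e] dD by simp
    have dA1: "degree (- (D ^ (e + 1) + D ^ (e + 1))) = 2 * d * (e + 1)"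
      using two dB1 by (simp only: degree_minus sum_self_smult degree_smult_eq if_False)
    have dA2: "degree (D ^ e + D ^ e) = 2 * d * e"
      using two dB by (simp only: sum_self_smult degree_smult_eq if_False)
    have neq: "2 * d * (e + 1) \<noteq> 2 * d * e" using dpos by simp
    have dAne: "degree (- (D ^ (e + 1) + D ^ (e + 1))) \<noteq> degree (D ^ e + D ^ e)"
      unfolding dA1 dA2 using neq .
    have dBe: "degree (D ^ e) = degree (D ^ e + D ^ e)" unfolding dB dA2 ..
    have rf: "(\<Sum>i\<in>cf_period_idx x. f (degree (cf_pq x i))) = f (2 * d * (e + 1)) + f (2 * d * e)" for f
      using ratio_formula[OF pq dAne dBe, of f] unfolding dA1 dA2 .
    have num: "(\<Sum>i\<in>cf_period_idx x. max (degree (cf_pq x i) - n) 0) = (2 * d * (e + 1) - n) + (2 * d * e - n)"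
      using rf[of "\<lambda>a. max (a - n) 0"] by simp
    have den: "(\<Sum>i\<in>cf_period_idx x. degree (cf_pq x i)) = 2 * d * (e + 1) + 2 * d * e"
      using rf[of "\<lambda>a. a"] by simp
    have R: "escape_ratio (Theta_at p P) P (p ^ j) n = real ((2 * d * (e + 1) - n) + (2 * d * e - n)) / real (2 * d * (e + 1) + 2 * d * e)"
      unfolding escape_ratio_def Let_def Phi k_def[symmetric] x_def[symmetric] num den ..
    have kk: "real (2 * d * (e + 1) + 2 * d * e) = 2 * real d * real k"
      unfolding ke by (simp add: algebra_simps)
    have "real ((2 * d * (e + 1) - n) + (2 * d * e - n)) \<ge> real (2 * d * (e + 1)) - real n + (real (2 * d * e) - real n)"
      by linarith
    then have numge: "real ((2 * d * (e + 1) - n) + (2 * d * e - n)) \<ge> 2 * real d * real k - 2 * real n"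
      unfolding ke by (simp add: algebra_simps)
    have kpos: "real k > 0" using p2 by (simp add: k_def)
    have "1 - real n / (real d * real k) = (2 * real d * real k - 2 * real n) / (2 * real d * real k)"
      using dpos kpos by (simp add: field_simps)
    also have "\<dots> \<le> real ((2 * d * (e + 1) - n) + (2 * d * e - n)) / (2 * real d * real k)"
      using numge dpos kpos by (intro divide_right_mono) auto
    finally show ?thesis unfolding R kk k_def by simp
  qed
  have lims: "limsup (\<lambda>k. ereal (escape_ratio (Theta_at p P) P k n)) = 1" for n
  proof (rule antisym)
    show "limsup (\<lambda>k. ereal (escape_ratio (Theta_at p P) P k n)) \<le> 1"
      by (rule Limsup_bounded) (simp add: ratio_le1)
  next
    define u where "u = (\<lambda>k. ereal (escape_ratio (Theta_at p P) P k n))"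
    define r where "r = (\<lambda>j::nat. p ^ Suc j)"
    have smr: "strict_mono r" unfolding r_def using p2 by (intro strict_monoI) (simp add: power_strict_increasing)
    define c where "c = real n / real d"
    have t0: "(\<lambda>j. inverse (real p ^ j)) \<longlonglongrightarrow> 0" using p2 by (intro LIMSEQ_inverse_realpow_zero) simp
    have "(\<lambda>j. 1 - c * inverse (real p ^ Suc j)) \<longlonglongrightarrow> 1 - c * 0"
      by (intro tendsto_diff tendsto_const tendsto_mult LIMSEQ_Suc[OF t0])
    moreover have "(\<lambda>j. 1 - c * inverse (real p ^ Suc j)) = (\<lambda>j. 1 - real n / (real d * real p ^ Suc j))"
      by (simp add: c_def field_simps)
    ultimately have "(\<lambda>j. 1 - real n / (real d * real p ^ Suc j)) \<longlonglongrightarrow> 1" by simp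
    then have tl: "(\<lambda>j. ereal (1 - real n / (real d * real p ^ Suc j))) \<longlonglongrightarrow> ereal 1" by (rule tendsto_ereal)
    have "1 = limsup (\<lambda>j. ereal (1 - real n / (real d * real p ^ Suc j)))"
      using lim_imp_Limsup[OF _ tl] by simp
    also have "\<dots> \<le> limsup (u \<circ> r)"
    proof (rule Limsup_mono, rule always_eventually, rule allI)
      fix j
      have "1 - real n / (real d * real p ^ Suc j) \<le> escape_ratio (Theta_at p P) P (p ^ Suc j) n"
        by (rule lower) simp
      then show "ereal (1 - real n / (real d * real p ^ Suc j)) \<le> (u \<circ> r) j"
        unfolding u_def r_def o_def by simp
    qed
    also have "\<dots> \<le> limsup u" by (rule limsup_subseq_mono[OF smr])
    finally show "1 \<le> limsup (\<lambda>k. ereal (escape_ratio (Theta_at p P) P k n))" unfolding u_def .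
  qed
  have FM: "full_max_escape (Theta_at p P) P"
    unfolding full_max_escape_def c_max_escape_def
    by (rule exI[of _ 1]) (simp add: lims)
  show ?thesis using QI FM by blast
qed


theorem theorem1p23:
  fixes p :: nat and P :: "'a::field poly"
  assumes "prime p" and "odd p" and "card (UNIV :: 'a set) = p" and "irreducible P"
  shows "quadratic_irrational (Theta_at p P) \<and> full_max_escape (Theta_at p P) P"
  using main_escape[OF assms] .

end
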